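(* Let $q:\mathbb{R}^{2n}\to\mathbb{C}$ be a quadratic form such that $\exp H_q$ is strictly positive. Then $q$ is supersymmetric.
   Context: Points of $\mathbb{C}^{2n}$ are written $\mathbf{z}=(x,\xi)$, and $\sigma((x_1,\xi_1),(x_2,\xi_2))=\xi_1\cdot x_2-\xi_2\cdot x_1$ (complex bilinear, no conjugation). A complex linear map $\mathbf{K}$ of $\mathbb{C}^{2n}$ is canonical if $\sigma(\mathbf{K}\mathbf{z},\mathbf{K}\mathbf{w})=\sigma(\mathbf{z},\mathbf{w})$ for all $\mathbf{z},\mathbf{w}$; it is strictly positive if it is canonical and $i\big(\sigma(\overline{\mathbf{K}\mathbf{z}},\mathbf{K}\mathbf{z})-\sigma(\overline{\mathbf{z}},\mathbf{z})\big)>0$ for all $\mathbf{z}\in\mathbb{C}^{2n}\setminus\{0\}$. For a quadratic form $q$ (extended holomorphically to $\mathbb{C}^{2n}$), its Hamilton map is the matrix $H_q=\begin{pmatrix} q''_{\xi x} & q''_{\xi\xi}\\ -q''_{xx} & -q''_{x\xi}\end{pmatrix}$. A quadratic form $q$ on $\mathbb{R}^{2n}$ is supersymmetric if $q(x,\xi)=B(\xi-G_+x)\cdot(\xi-G_-x)$ with $B\in\mathbb{C}^{n\times n}$ and $G_\pm\in\mathbb{C}^{n\times n}$ symmetric with $\pm\operatorname{Im}G_\pm$ positive definite. *)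

theory Defs
  imports "HOL-Analysis.Analysis" "HOL-Library.Complex_Order"
begin

text \<open>Points of C^{2n} are vectors indexed by 'n + 'n: index Inl i is x_i, index Inr i is xi_i.\<close>

definition symp_form :: "complex^('n::finite + 'n) \<Rightarrow> complex^('n + 'n) \<Rightarrow> complex" where
  "symp_form z w = (\<Sum>i\<in>UNIV. z $ Inr i * w $ Inl i - w $ Inr i * z $ Inl i)"

definition cconj :: "complex^'m::finite \<Rightarrow> complex^'m" where
  "cconj z = (\<chi> i. cnj (z $ i))"

definition canonical :: "complex^('n::finite + 'n)^('n + 'n) \<Rightarrow> bool" where
  "canonical K \<longleftrightarrow> (\<forall>z w. symp_form (K *v z) (K *v w) = symp_form z w)"

definition strictly_positive :: "complex^('n::finite + 'n)^('n + 'n) \<Rightarrow> bool" where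
  "strictly_positive K \<longleftrightarrow> canonical K \<and>
     (\<forall>z. z \<noteq> 0 \<longrightarrow>
        \<i> * (symp_form (cconj (K *v z)) (K *v z) - symp_form (cconj z) z) > 0)"

definition mpow :: "'a::comm_ring_1^'m::finite^'m \<Rightarrow> nat \<Rightarrow> 'a^'m^'m" where
  "mpow M k = ((\<lambda>A. A ** M) ^^ k) (mat 1)"

definition mexp :: "complex^'m::finite^'m \<Rightarrow> complex^'m^'m" where
  "mexp M = (\<Sum>k. (1 / fact k) *\<^sub>R mpow M k)"

definition quadratic_form :: "((real^'n::finite) \<times> (real^'n) \<Rightarrow> complex) \<Rightarrow> bool" where
  "quadratic_form q \<longleftrightarrow> (\<exists>A C D :: complex^'n^'n. \<forall>x \<xi>.
     q (x, \<xi>) = (\<Sum>i\<in>UNIV. \<Sum>j\<in>UNIV.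
        A $ i $ j * of_real (x $ i) * of_real (x $ j)
      + C $ i $ j * of_real (\<xi> $ i) * of_real (x $ j)
      + D $ i $ j * of_real (\<xi> $ i) * of_real (\<xi> $ j)))"

text \<open>Second derivative of a quadratic form in directions u, v (exact for quadratic forms).\<close>

definition d2 :: "('a::real_vector \<Rightarrow> complex) \<Rightarrow> 'a \<Rightarrow> 'a \<Rightarrow> complex" where
  "d2 q u v = q (u + v) - q u - q v"

definition ex :: "'n::finite \<Rightarrow> (real^'n) \<times> (real^'n)" where
  "ex i = (axis i 1, 0)"

definition exi :: "'n::finite \<Rightarrow> (real^'n) \<times> (real^'n)" where
  "exi i = (0, axis i 1)"

text \<open>Hamilton map H_q = [[q''_{xi x}, q''_{xi xi}], [-q''_{xx}, -q''_{x xi}]].\<close>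

definition hamilton_map :: "((real^'n::finite) \<times> (real^'n) \<Rightarrow> complex) \<Rightarrow> complex^('n + 'n)^('n + 'n)" where
  "hamilton_map q = (\<chi> a b. case (a, b) of
      (Inl i, Inl j) \<Rightarrow> d2 q (exi i) (ex j)
    | (Inl i, Inr j) \<Rightarrow> d2 q (exi i) (exi j)
    | (Inr i, Inl j) \<Rightarrow> - d2 q (ex i) (ex j)
    | (Inr i, Inr j) \<Rightarrow> - d2 q (ex i) (exi j))"

definition cvec :: "real^'n::finite \<Rightarrow> complex^'n" where
  "cvec x = (\<chi> i. complex_of_real (x $ i))"

definition bdot :: "complex^'n::finite \<Rightarrow> complex^'n \<Rightarrow> complex" where
  "bdot u v = (\<Sum>i\<in>UNIV. u $ i * v $ i)"

definition im_mat :: "complex^'n::finite^'n \<Rightarrow> real^'n^'n" where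
  "im_mat G = (\<chi> i j. Im (G $ i $ j))"

definition pos_def :: "real^'n::finite^'n \<Rightarrow> bool" where
  "pos_def M \<longleftrightarrow> (\<forall>y. y \<noteq> 0 \<longrightarrow> 0 < y \<bullet> (M *v y))"

definition supersymmetric :: "((real^'n::finite) \<times> (real^'n) \<Rightarrow> complex) \<Rightarrow> bool" where
  "supersymmetric q \<longleftrightarrow> (\<exists>B Gp Gm :: complex^'n^'n.
     transpose Gp = Gp \<and> transpose Gm = Gm \<and>
     pos_def (im_mat Gp) \<and> pos_def (- im_mat Gm) \<and>
     (\<forall>x \<xi>. q (x, \<xi>) = bdot (B *v (cvec \<xi> - Gp *v cvec x)) (cvec \<xi> - Gm *v cvec x)))"

end

theory Submission
  imports Defs
begin


abbreviation clin :: "('a::field^'m \<Rightarrow> 'a^'k) \<Rightarrow> bool" where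
  "clin f \<equiv> Vector_Spaces.linear (*s) (*s) f"

definition xp :: "'b^('n::finite + 'n) \<Rightarrow> 'b^'n" where "xp z = (\<chi> i. z $ Inl i)"
definition kp :: "'b^('n::finite + 'n) \<Rightarrow> 'b^'n" where "kp z = (\<chi> i. z $ Inr i)"
definition join :: "'b^'n::finite \<Rightarrow> 'b^'n \<Rightarrow> 'b^('n + 'n)" where
  "join x k = (\<chi> a. case a of Inl i \<Rightarrow> x $ i | Inr i \<Rightarrow> k $ i)"

lemma xp_join[simp]: "xp (join x k) = x" by (simp add: xp_def join_def vec_eq_iff)
lemma kp_join[simp]: "kp (join x k) = k" by (simp add: kp_def join_def vec_eq_iff)
lemma join_xp_kp[simp]: "join (xp z) (kp z) = z"
  by (simp add: xp_def kp_def join_def vec_eq_iff split: sum.split)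
lemma join_nth_Inl[simp]: "join x k $ Inl i = x $ i" by (simp add: join_def)
lemma join_nth_Inr[simp]: "join x k $ Inr i = k $ i" by (simp add: join_def)
lemma xp_nth[simp]: "xp z $ i = z $ Inl i" by (simp add: xp_def)
lemma kp_nth[simp]: "kp z $ i = z $ Inr i" by (simp add: kp_def)
lemma join_eq_iff: "join x k = join x' k' \<longleftrightarrow> x = x' \<and> k = k'"
  by (metis xp_join kp_join)
lemma z_eq_join: "z = join (xp z) (kp z)" by simp

lemma join_add: "join x k + join x' k' = join (x + x') (k + k')"
  by (simp add: vec_eq_iff join_def split: sum.split)
lemma join_diff: "join x k - join x' k' = join (x - x') (k - k')"
  by (simp add: vec_eq_iff join_def split: sum.split)
lemma join_scale: "c *s join x k = join (c *s x) (c *s k)"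
  by (simp add: vec_eq_iff join_def split: sum.split)
lemma join_zero[simp]: "join 0 0 = 0"
  by (simp add: vec_eq_iff join_def split: sum.split)
lemma join_eq_0: "join x k = 0 \<longleftrightarrow> x = 0 \<and> k = 0"
  by (metis join_eq_iff join_zero)
lemma xp_add: "xp (z + w) = xp z + xp w" by (simp add: vec_eq_iff)
lemma kp_add: "kp (z + w) = kp z + kp w" by (simp add: vec_eq_iff)
lemma xp_scale: "xp (c *s z) = c *s xp z" by (simp add: vec_eq_iff)
lemma kp_scale: "kp (c *s z) = c *s kp z" by (simp add: vec_eq_iff)

lemma clin_xp: "clin (xp :: 'a::field^('n::finite+'n) \<Rightarrow> _)"
  by (unfold_locales) (simp_all add: vec_eq_iff)
lemma clin_kp: "clin (kp :: 'a::field^('n::finite+'n) \<Rightarrow> _)"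
  by (unfold_locales) (simp_all add: vec_eq_iff)
lemma clin_join: "clin f \<Longrightarrow> clin g \<Longrightarrow> clin (\<lambda>y. join (f y) (g y))"
  apply (unfold_locales)
  apply (simp_all add: join_add join_scale vec.linear_add vec.linear_scale)
  done

lemma sum_UNIV_plus: "(\<Sum>a\<in>(UNIV::('a::finite + 'b::finite) set). f a) = (\<Sum>i\<in>UNIV. f (Inl i)) + (\<Sum>i\<in>UNIV. f (Inr i))"
  using sum.Plus[of "UNIV::'a set" "UNIV::'b set" f] by (simp add: o_def)

lemma symp_form_alt: "symp_form z w = (\<Sum>i\<in>UNIV. kp z $ i * xp w $ i - kp w $ i * xp z $ i)"
  by (simp add: symp_form_def)

lemma clin_cont: fixes f :: "complex^'m::finite \<Rightarrow> complex^'k::finite"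
  assumes "clin f" shows "continuous_on S f" "isCont f z"
proof -
  have e: "f = (\<lambda>x. matrix f *v x)" using matrix_works[OF assms] by auto
  show "continuous_on S f" by (subst e) (intro continuous_intros)
  show "isCont f z" by (subst e) (intro continuous_intros)
qed

lemma clin_tendsto: fixes f :: "complex^'m::finite \<Rightarrow> complex^'k::finite"
  assumes "clin f" "X \<longlonglongrightarrow> l" shows "(\<lambda>n. f (X n)) \<longlonglongrightarrow> f l"
  using clin_cont(2)[OF assms(1)] assms(2) isCont_tendsto_compose by blast

lemma clin_iter: fixes f :: "'a::field^'m \<Rightarrow> 'a^'m" shows "clin f \<Longrightarrow> clin (f ^^ j)"
proof (induction j)
  case 0 have "(f^^0) = id" by simp then show ?case using vec.linear_id by metis
next
  case (Suc j) then show ?case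
    using Vector_Spaces.linear_compose[of "(*s)" "(*s)" "f^^j" "(*s)" f] by (simp add: o_def)
qed



definition hr :: "complex^('n::finite + 'n) \<Rightarrow> real" where
  "hr z = (\<Sum>i\<in>UNIV. 2 * Im (z $ Inr i * cnj (z $ Inl i)))"
definition aco :: "complex^('n::finite + 'n) \<Rightarrow> complex^'n" where
  "aco z = xp z + \<i> *s kp z"
definition bco :: "complex^('n::finite + 'n) \<Rightarrow> complex^'n" where
  "bco z = xp z - \<i> *s kp z"
definition zab :: "complex^'n::finite \<Rightarrow> complex^'n \<Rightarrow> complex^('n + 'n)" where
  "zab a b = join ((1/2) *s (a + b)) ((- \<i>/2) *s (a - b))"

lemma norm_sq_cvec: "(norm (x::complex^'n::finite))^2 = (\<Sum>i\<in>UNIV. (cmod (x $ i))^2)"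
  unfolding norm_vec_def L2_set_def by (simp add: sum_nonneg)

lemma cmod_diff_sq: "(cmod (x - \<i> * k))^2 - (cmod (x + \<i> * k))^2 = 4 * Im (k * cnj x)"
  unfolding cmod_power2 by (simp add: power2_eq_square algebra_simps)

lemma hr_ab: "hr z = ((norm (bco z))^2 - (norm (aco z))^2) / 2"
  unfolding norm_sq_cvec hr_def aco_def bco_def
  apply (simp add: sum_subtractf[symmetric] sum_divide_distrib cmod_diff_sq)
  apply (rule sum.cong) apply auto done

lemma aco_zab[simp]: "aco (zab a b) = a"
  by (simp add: aco_def zab_def vec_eq_iff field_simps)
lemma bco_zab[simp]: "bco (zab a b) = b"
  by (simp add: bco_def zab_def vec_eq_iff field_simps)
lemma zab_aco_bco[simp]: "zab (aco z) (bco z) = z"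
  by (simp add: aco_def bco_def zab_def vec_eq_iff join_def field_simps split: sum.split)

lemma clin_aco: "clin aco"
  by (unfold_locales) (simp_all add: aco_def vec_eq_iff algebra_simps)
lemma clin_bco: "clin bco"
  by (unfold_locales) (simp_all add: bco_def vec_eq_iff algebra_simps)

lemma hr_sym: "\<i> * symp_form (cconj z) z = complex_of_real (hr z)"
  unfolding symp_form_def hr_def cconj_def
  by (simp add: sum_distrib_left complex_eq_iff Re_sum Im_sum algebra_simps)

lemma hr_xp0: "xp z = 0 \<Longrightarrow> hr z = 0"
  by (simp add: hr_def vec_eq_iff)

lemma hr_scaleR: "hr (r *\<^sub>R z) = r^2 * hr z"
  by (simp add: hr_def sum_distrib_left power2_eq_square algebra_simps)

lemma hr_cconj: "hr (cconj z) = - hr z"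
  by (simp add: hr_def cconj_def sum_negf[symmetric])

lemma symp_cconj: "symp_form (cconj z) (cconj w) = cnj (symp_form z w)"
  by (simp add: symp_form_def cconj_def)

lemma cconj_cconj[simp]: "cconj (cconj z) = z" by (simp add: cconj_def vec_eq_iff)
lemma cconj_add: "cconj (z + w) = cconj z + cconj w" by (simp add: cconj_def vec_eq_iff)
lemma cconj_scale: "cconj (c *s z) = cnj c *s cconj z" by (simp add: cconj_def vec_eq_iff)
lemma cconj_0[simp]: "cconj 0 = 0" by (simp add: cconj_def vec_eq_iff)
lemma cconj_eq_0[simp]: "cconj z = 0 \<longleftrightarrow> z = 0" by (metis cconj_0 cconj_cconj)
lemma cconj_join: "cconj (join x k) = join (cconj x) (cconj k)"
  by (simp add: cconj_def vec_eq_iff join_def split: sum.split)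

lemma hr_cont: "continuous_on S hr"
  unfolding hr_def by (intro continuous_intros)
lemma hr_isCont: "isCont hr z"
  using hr_cont[of UNIV] continuous_on_eq_continuous_at by blast
lemma hr_tendsto: "X \<longlonglongrightarrow> x \<Longrightarrow> (\<lambda>n. hr (X n)) \<longlonglongrightarrow> hr x"
  unfolding hr_def by (intro tendsto_intros)
lemma symp_tendsto: "X \<longlonglongrightarrow> x \<Longrightarrow> Y \<longlonglongrightarrow> y \<Longrightarrow> (\<lambda>n. symp_form (X n) (Y n)) \<longlonglongrightarrow> symp_form x y"
  unfolding symp_form_def by (intro tendsto_intros)

lemma mv_tendsto: "M \<longlonglongrightarrow> (N::complex^'m::finite^'k::finite) \<Longrightarrow> (\<lambda>n. M n *v a) \<longlonglongrightarrow> N *v a"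
  unfolding matrix_vector_mult_def by (intro tendsto_intros)

lemma symp_0[simp]: "symp_form 0 w = 0" "symp_form w 0 = 0" by (simp_all add: symp_form_def)


lemma mv_axis: "((T::'a::comm_ring_1^'n::finite^'m) *v axis j 1) $ i = T $ i $ j"
  by (simp add: matrix_vector_mult_def axis_def if_distrib cong: if_cong)

lemma norm_axis_c: "norm (axis i (1::complex) :: complex^'n::finite) = 1"
  by (simp add: inner_axis' norm_eq_1)

lemma scaleR_smult: "(r *\<^sub>R (v::complex^'m::finite)) = complex_of_real r *s v"
  by (simp add: vec_eq_iff complex_eq_iff)

lemma clin_scaleR: "clin f \<Longrightarrow> f (r *\<^sub>R (v::complex^'m::finite)) = r *\<^sub>R (f v :: complex^'k::finite)"
  by (simp add: scaleR_smult vec.linear_scale)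

lemma clin_smult: "clin (\<lambda>v::'a::field^'m. c *s v)"
  by (unfold_locales) (simp_all add: vec_eq_iff algebra_simps)

lemma zab_split: "zab a b = zab a 0 + zab 0 b"
  by (simp add: zab_def join_add vec_eq_iff algebra_simps)

lemma zab_00[simp]: "zab 0 0 = 0" by (simp add: zab_def)

lemma clin_zab0: "clin (zab 0)"
  by (unfold_locales) (simp_all add: zab_def join_add join_scale vec_eq_iff algebra_simps)

lemma clin_zab_f: "clin f \<Longrightarrow> clin (\<lambda>a. zab a (f a))"
  by (unfold_locales) (simp_all add: zab_def join_add join_scale vec_eq_iff algebra_simps vec.linear_add vec.linear_scale)

lemma clin_comp: "clin f \<Longrightarrow> clin g \<Longrightarrow> clin (\<lambda>x. f (g x))"
  using Vector_Spaces.linear_compose[of "(*s)" "(*s)" g "(*s)" f] by (simp add: o_def)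

lemma clin_mv: "clin (\<lambda>x. (A::'a::field^'m::finite^'k::finite) *v x)"
  by simp


lemma nth_le_norm: "norm ((x::'a::real_normed_vector^'n::finite) $ i) \<le> norm x"
  unfolding norm_vec_def by (rule member_le_L2_set) simp_all
lemma sum_axis_r: "(\<Sum>k\<in>UNIV. f k * (axis j (1::'a::comm_ring_1) $ k)) = f j"
proof -
  have "(\<Sum>k\<in>UNIV. f k * (axis j (1::'a) $ k)) = (\<Sum>k\<in>UNIV. if k = j then f k else 0)"
    by (rule sum.cong) (auto simp: axis_def)
  then show ?thesis by simp
qed
lemma symp_join_axis: "symp_form (join (axis i 1) u) (join (axis j 1) v) = u $ j - v $ i"
  by (simp add: symp_form_alt sum_subtractf sum_axis_r)

locale expand =
  fixes K :: "complex^('n::finite+'n) \<Rightarrow> complex^('n+'n)"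
  assumes clinK: "clin K"
    and sympK: "\<And>z w. symp_form (K z) (K w) = symp_form z w"
    and hrK: "\<And>z. z \<noteq> 0 \<Longrightarrow> hr (K z) > hr z"
begin

lemma K0[simp]: "K 0 = 0" using clinK vec.linear_0 by blast

lemma hr0[simp]: "hr 0 = 0" by (simp add: hr_def)

lemma hr_mono1: "hr z \<le> hr (K z)"
  using hrK[of z] by (cases "z = 0") auto

lemma iter_Suc: "(K^^Suc j) z = K ((K^^j) z)" by simp

lemma hr_incseq: "incseq (\<lambda>j. hr ((K^^j) z))"
  by (rule incseq_SucI) (simp add: hr_mono1)

lemma hr_iter_mono: "j \<le> k \<Longrightarrow> hr ((K^^j) z) \<le> hr ((K^^k) z)"
  using hr_incseq[of z] unfolding mono_def by blast

lemma clin_Kj: "clin (K^^j)" by (rule clin_iter[OF clinK])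

lemma Kj_tendsto: "X \<longlonglongrightarrow> l \<Longrightarrow> (\<lambda>n. (K^^j) (X n)) \<longlonglongrightarrow> (K^^j) l"
  by (rule clin_tendsto[OF clin_Kj])

lemma unif: "\<exists>c>0. \<forall>z. c * (norm z)^2 \<le> hr (K z) - hr z"
proof -
  let ?S = "sphere (0::complex^('n+'n)) 1"
  obtain u :: "complex^('n+'n)" where u: "norm u = 1" using vector_choose_size[of 1] by auto
  have ne: "?S \<noteq> {}" using u by auto
  have cK: "continuous_on ?S K" by (rule clin_cont[OF clinK])
  have "continuous_on ?S (\<lambda>z. hr (K z) - hr z)"
    by (intro continuous_intros continuous_on_compose2[OF hr_cont cK] hr_cont) auto
  then obtain z0 where z0: "z0 \<in> ?S" "\<And>y. y \<in> ?S \<Longrightarrow> hr (K z0) - hr z0 \<le> hr (K y) - hr y"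
    using continuous_attains_inf[OF compact_sphere ne] by blast
  have "z0 \<noteq> 0" using z0(1) by auto
  then have cpos: "hr (K z0) - hr z0 > 0" using hrK by auto
  show ?thesis
  proof (intro exI[of _ "hr (K z0) - hr z0"] conjI allI cpos)
    fix z :: "complex^('n+'n)"
    show "(hr (K z0) - hr z0) * (norm z)^2 \<le> hr (K z) - hr z"
    proof (cases "z = 0")
      case True then show ?thesis by simp
    next
      case False
      define v where "v = (1 / norm z) *\<^sub>R z"
      have vS: "v \<in> ?S" using False by (simp add: v_def)
      have zv: "z = norm z *\<^sub>R v" using False by (simp add: v_def)
      have "hr (K z) - hr z = (norm z)^2 * (hr (K v) - hr v)"
        by (subst zv, subst (2) zv) (simp add: clin_scaleR[OF clinK] hr_scaleR algebra_simps)
      then show ?thesis using z0(2)[OF vS] by (metis mult.commute mult_right_mono zero_le_power2)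
    qed
  qed
qed

definition stable :: "complex^('n+'n) \<Rightarrow> bool" where
  "stable z \<longleftrightarrow> (\<lambda>j. (K^^j) z) \<longlonglongrightarrow> 0"

lemma nonpos_stable:
  assumes nz: "\<And>j. hr ((K^^j) z) \<le> 0"
  shows "stable z"
proof -
  obtain c where c: "c > 0" "\<And>z. c * (norm z)^2 \<le> hr (K z) - hr z" using unif by blast
  define a where "a j = hr ((K^^j) z)" for j
  have inc: "incseq a" unfolding a_def by (rule hr_incseq)
  obtain L where L: "a \<longlonglongrightarrow> L" using incseq_convergent[OF inc, of 0] nz unfolding a_def by blast
  have d: "(\<lambda>j. a (Suc j) - a j) \<longlonglongrightarrow> 0"
    using tendsto_diff[OF LIMSEQ_Suc[OF L] L] by simp
  have b: "(norm ((K^^j) z))^2 \<le> (a (Suc j) - a j) / c" for j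
    using c(2)[of "(K^^j) z"] c(1) by (simp add: a_def field_simps)
  have "(\<lambda>j. (norm ((K^^j) z))^2) \<longlonglongrightarrow> 0"
    by (rule tendsto_sandwich[of "\<lambda>_. 0" _ _ "\<lambda>j. (a (Suc j) - a j) / c"])
       (use b in auto, use tendsto_divide_zero[OF d] in simp)
  then have "(\<lambda>j. sqrt ((norm ((K^^j) z))^2)) \<longlonglongrightarrow> sqrt 0" by (rule tendsto_real_sqrt)
  then have "(\<lambda>j. norm ((K^^j) z)) \<longlonglongrightarrow> 0" by simp
  then show ?thesis unfolding stable_def using tendsto_norm_zero_iff by blast
qed

lemma symp_iter: "symp_form ((K^^j) z) ((K^^j) w) = symp_form z w"
  by (induction j) (simp_all add: sympK)

lemma stable_symp: "stable z \<Longrightarrow> stable w \<Longrightarrow> symp_form z w = 0"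
  unfolding stable_def
  using symp_tendsto[of "\<lambda>j. (K^^j) z" 0 "\<lambda>j. (K^^j) w" 0]
  by (simp add: symp_iter LIMSEQ_const_iff)

lemma stable_neg: assumes "stable z" "z \<noteq> 0" shows "hr z < 0"
proof -
  have "(\<lambda>j. hr ((K^^j) z)) \<longlonglongrightarrow> hr (0::complex^('n+'n))"
    by (rule hr_tendsto) (use assms(1) in \<open>simp add: stable_def\<close>)
  then have "hr ((K^^1) z) \<le> 0" using incseq_le[OF hr_incseq, of z 0 1] by simp
  then show ?thesis using hrK[OF assms(2)] by simp
qed

lemma stable_L:
  assumes "clin L" "\<And>z. L (K z) = K (L z)" "stable z"
  shows "stable (L z)"
proof -
  have c: "L ((K^^j) z) = (K^^j) (L z)" for j by (induction j) (simp_all add: assms(2))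
  have "(\<lambda>j. L ((K^^j) z)) \<longlonglongrightarrow> L 0"
    using clin_tendsto[OF assms(1)] assms(3) unfolding stable_def by blast
  then show ?thesis unfolding stable_def using c vec.linear_0[OF assms(1)] by simp
qed

end


context expand begin

lemma stable_add: "stable z \<Longrightarrow> stable w \<Longrightarrow> stable (z + w)"
  unfolding stable_def using tendsto_add[of "\<lambda>j. (K^^j) z" 0 _ "\<lambda>j. (K^^j) w" 0]
  by (simp add: vec.linear_add[OF clin_Kj])

lemma approx:
  "\<exists>T::complex^'n^'n. (\<forall>a. norm (T *v a) \<le> norm a) \<and> (\<forall>a. hr ((K^^k) (zab a (T *v a))) \<le> 0)"
proof -
  define \<Psi> where "\<Psi> z = join (aco z) (bco ((K^^k) z))" for z
  have lin: "clin \<Psi>" unfolding \<Psi>_def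
    by (intro clin_join clin_aco clin_comp[OF clin_bco clin_Kj])
  have inj: "inj \<Psi>"
    unfolding vec.linear_inj_iff_eq_0[OF lin]
  proof (intro allI impI)
    fix z assume "\<Psi> z = 0"
    then have a: "aco z = 0" and b: "bco ((K^^k) z) = 0"
      unfolding \<Psi>_def using join_eq_0 by auto
    have "hr z \<le> hr ((K^^k) z)" using hr_iter_mono[of 0 k z] by simp
    also have "\<dots> \<le> 0" using b by (simp add: hr_ab)
    finally have "(norm (bco z))^2 \<le> 0" using a by (simp add: hr_ab)
    then have "bco z = 0" by simp
    then show "z = 0" using a zab_aco_bco[of z] by simp
  qed
  have surj: "surj \<Psi>" by (rule vec.linear_inj_imp_surj[OF lin inj])
  obtain g where g: "clin g" "g \<circ> \<Psi> = id"
    using vec.linear_injective_left_inverse[OF lin inj] by blast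
  have gr: "\<Psi> (g y) = y" for y
  proof -
    obtain x where "y = \<Psi> x" using surj by blast
    then show ?thesis using g(2) by (simp add: fun_eq_iff)
  qed
  define f where "f a = bco (g (join a 0))" for a
  have lf: "clin f" unfolding f_def
    by (intro clin_comp[OF clin_bco] clin_comp[OF g(1)] clin_join vec.linear_id[unfolded id_def])
      (unfold_locales, simp_all)
  define T where "T = matrix f"
  have Tf: "T *v a = f a" for a unfolding T_def using matrix_works[OF lf] by simp
  show ?thesis
  proof (intro exI[of _ T] conjI allI)
    fix a
    define w where "w = g (join a 0)"
    have "\<Psi> w = join a 0" unfolding w_def by (rule gr)
    then have aw: "aco w = a" and bw: "bco ((K^^k) w) = 0" unfolding \<Psi>_def join_eq_iff by auto
    have zw: "zab a (T *v a) = w" using aw zab_aco_bco[of w] by (simp add: Tf f_def w_def)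
    show hk: "hr ((K^^k) (zab a (T *v a))) \<le> 0" using bw by (simp add: zw hr_ab)
    have "hr w \<le> 0" using hr_iter_mono[of 0 k w] hk zw by simp
    then have "(norm (T *v a))^2 \<le> (norm a)^2"
      using aw by (simp add: hr_ab zw[symmetric])
    then show "norm (T *v a) \<le> norm a" by (rule power2_le_imp_le) simp
  qed
qed

lemma norm_mat_bound:
  assumes "\<And>a. norm ((T::complex^'n^'n) *v a) \<le> norm a"
  shows "norm T \<le> of_nat (CARD('n) * CARD('n))"
proof -
  have e: "norm (T $ i $ j) \<le> 1" for i j
  proof -
    have "norm (T $ i $ j) = norm ((T *v axis j 1) $ i)" by (simp add: mv_axis)
    also have "\<dots> \<le> norm (T *v axis j 1)" by (rule nth_le_norm)
    also have "\<dots> \<le> 1" using assms[of "axis j 1"] by (simp add: norm_axis_c)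
    finally show ?thesis .
  qed
  have r: "norm (T $ i) \<le> of_nat CARD('n)" for i
  proof -
    have "norm (T $ i) \<le> (\<Sum>j\<in>UNIV. norm (T $ i $ j))" unfolding norm_vec_def by (rule L2_set_le_sum) simp
    also have "\<dots> \<le> (\<Sum>j\<in>(UNIV::'n set). 1)" by (rule sum_mono) (rule e)
    finally show ?thesis by simp
  qed
  have "norm T \<le> (\<Sum>i\<in>UNIV. norm (T $ i))" unfolding norm_vec_def by (rule L2_set_le_sum) simp
  also have "\<dots> \<le> (\<Sum>i\<in>(UNIV::'n set). of_nat CARD('n))" by (rule sum_mono) (rule r)
  finally show ?thesis by simp
qed

lemma main_graph:
  "\<exists>G::complex^'n^'n. transpose G = G \<and> (\<forall>y. y \<noteq> 0 \<longrightarrow> hr (join y (G *v y)) < 0)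
     \<and> (\<forall>y. stable (join y (G *v y)))"
proof -
  obtain Tm where Tm: "\<And>k. (\<forall>a. norm (Tm k *v a) \<le> norm a) \<and> (\<forall>a. hr ((K^^k) (zab a (Tm k *v a))) \<le> 0)"
    using approx by metis
  have "bounded (range Tm)"
    unfolding bounded_iff using norm_mat_bound Tm by blast
  then obtain T r where r: "strict_mono r" "(Tm \<circ> r) \<longlonglongrightarrow> T"
    using bounded_imp_convergent_subsequence by blast
  have np: "hr ((K^^j) (zab a (T *v a))) \<le> 0" for a j
  proof (rule LIMSEQ_le_const2)
    have "(\<lambda>m. Tm (r m) *v a) \<longlonglongrightarrow> T *v a" using mv_tendsto[OF r(2)] by (simp add: o_def)
    then have "(\<lambda>m. zab 0 (Tm (r m) *v a)) \<longlonglongrightarrow> zab 0 (T *v a)" by (rule clin_tendsto[OF clin_zab0])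
    then have "(\<lambda>m. zab a 0 + zab 0 (Tm (r m) *v a)) \<longlonglongrightarrow> zab a 0 + zab 0 (T *v a)"
      by (intro tendsto_intros)
    then have "(\<lambda>m. zab a (Tm (r m) *v a)) \<longlonglongrightarrow> zab a (T *v a)"
      by (simp add: zab_split[symmetric])
    then show "(\<lambda>m. hr ((K^^j) (zab a (Tm (r m) *v a)))) \<longlonglongrightarrow> hr ((K^^j) (zab a (T *v a)))"
      by (intro hr_tendsto Kj_tendsto)
    show "\<exists>N. \<forall>m\<ge>N. hr ((K^^j) (zab a (Tm (r m) *v a))) \<le> 0"
    proof (intro exI[of _ j] allI impI)
      fix m assume "j \<le> m"
      then have "j \<le> r m" using seq_suble[OF r(1), of m] by simp
      then have "hr ((K^^j) (zab a (Tm (r m) *v a))) \<le> hr ((K^^(r m)) (zab a (Tm (r m) *v a)))"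
        by (rule hr_iter_mono)
      also have "\<dots> \<le> 0" using Tm by blast
      finally show "hr ((K^^j) (zab a (Tm (r m) *v a))) \<le> 0" .
    qed
  qed
  have st: "stable (zab a (T *v a))" for a by (rule nonpos_stable) (rule np)
  define X where "X a = xp (zab a (T *v a))" for a
  have lX: "clin X" unfolding X_def by (intro clin_comp[OF clin_xp] clin_zab_f clin_mv)
  have iX: "inj X" unfolding vec.linear_inj_iff_eq_0[OF lX]
  proof (intro allI impI)
    fix a assume "X a = 0"
    then have "hr (zab a (T *v a)) = 0" unfolding X_def by (rule hr_xp0)
    then have "zab a (T *v a) = 0" using stable_neg[OF st[of a]] by fastforce
    then show "a = 0" using aco_zab[of a "T *v a"] by (simp add: aco_def vec_eq_iff)
  qed
  have sX: "surj X" by (rule vec.linear_inj_imp_surj[OF lX iX])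
  obtain g where g: "clin g" "g \<circ> X = id"
    using vec.linear_injective_left_inverse[OF lX iX] by blast
  have gr: "X (g y) = y" for y
  proof -
    obtain x where "y = X x" using sX by blast
    then show ?thesis using g(2) by (simp add: fun_eq_iff)
  qed
  define Z where "Z y = zab (g y) (T *v g y)" for y
  define G where "G = matrix (\<lambda>y. kp (Z y))"
  have lG: "clin (\<lambda>y. kp (Z y))" unfolding Z_def
    by (intro clin_comp[OF clin_kp] clin_comp[OF clin_zab_f[OF clin_mv] g(1)])
  have GZ: "join y (G *v y) = Z y" for y
  proof -
    have "xp (Z y) = y" using gr[of y] by (simp add: X_def Z_def)
    then show ?thesis unfolding G_def matrix_works[OF lG] by (metis join_xp_kp)
  qed
  have stZ: "stable (join y (G *v y))" for y unfolding GZ Z_def by (rule st)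
  have sym: "symp_form (join y (G *v y)) (join w (G *v w)) = 0" for y w
    by (rule stable_symp[OF stZ stZ])
  have tr: "transpose G = G"
  proof -
    have "G $ j $ i = G $ i $ j" for i j
      using sym[of "axis i 1" "axis j 1"]
      by (simp add: symp_join_axis mv_axis)
    then show ?thesis by (simp add: transpose_def vec_eq_iff)
  qed
  show ?thesis
  proof (intro exI[of _ G] conjI allI impI tr stZ)
    fix y :: "complex^'n" assume "y \<noteq> 0"
    then have "join y (G *v y) \<noteq> 0" using join_eq_0 by blast
    then show "hr (join y (G *v y)) < 0" by (rule stable_neg[OF stZ])
  qed
qed

end


lemma mpow_0: "mpow M 0 = mat 1" by (simp add: mpow_def)
lemma mpow_Suc: "mpow M (Suc k) = mpow M k ** M" by (simp add: mpow_def)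

lemma mpow_comm: "mpow M k ** M = M ** mpow M k"
proof (induction k)
  case 0 then show ?case by (simp add: mpow_0)
next
  case (Suc k)
  have "mpow M (Suc k) ** M = (mpow M k ** M) ** M" by (simp add: mpow_Suc)
  also have "\<dots> = (M ** mpow M k) ** M" by (simp add: Suc)
  also have "\<dots> = M ** mpow M (Suc k)" by (simp add: mpow_Suc matrix_mul_assoc)
  finally show ?case .
qed

lemma nth_le_norm2: "norm ((x::'a::real_normed_vector^'n::finite) $ i) \<le> norm x"
  unfolding norm_vec_def by (rule member_le_L2_set) simp_all

lemma mpow_entry_bound:
  fixes M :: "complex^'m::finite^'m"
  defines "m \<equiv> (\<Sum>i\<in>UNIV. \<Sum>j\<in>UNIV. norm (M $ i $ j))"
  shows "norm (mpow M k $ i $ j) \<le> (of_nat CARD('m) * m)^k"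
proof (induction k arbitrary: i j)
  case 0 then show ?case by (simp add: mpow_0 mat_def)
next
  case (Suc k)
  have mge: "norm (M $ l $ j) \<le> m" for l j
  proof -
    have "norm (M $ l $ j) \<le> (\<Sum>j\<in>UNIV. norm (M $ l $ j))"
      by (rule member_le_sum) auto
    also have "\<dots> \<le> m" unfolding m_def by (rule member_le_sum) (auto intro: sum_nonneg)
    finally show ?thesis .
  qed
  have m0: "m \<ge> 0" unfolding m_def by (intro sum_nonneg) simp
  have "norm (mpow M (Suc k) $ i $ j) = norm (\<Sum>l\<in>UNIV. mpow M k $ i $ l * M $ l $ j)"
    by (simp add: mpow_Suc matrix_matrix_mult_def)
  also have "\<dots> \<le> (\<Sum>l\<in>UNIV. norm (mpow M k $ i $ l) * norm (M $ l $ j))"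
    by (rule order_trans[OF norm_sum]) (simp add: norm_mult)
  also have "\<dots> \<le> (\<Sum>l\<in>(UNIV::'m set). (of_nat CARD('m) * m)^k * m)"
    by (rule sum_mono, rule mult_mono) (auto simp: Suc mge m0)
  also have "\<dots> = (of_nat CARD('m) * m)^Suc k" by (simp add: algebra_simps)
  finally show ?case .
qed

lemma norm_le_entries:
  fixes A :: "complex^'m::finite^'k::finite"
  assumes "\<And>i j. norm (A $ i $ j) \<le> b"
  shows "norm A \<le> of_nat CARD('k) * of_nat CARD('m) * b"
proof -
  have r: "norm (A $ i) \<le> of_nat CARD('m) * b" for i
  proof -
    have "norm (A $ i) \<le> (\<Sum>j\<in>UNIV. norm (A $ i $ j))" unfolding norm_vec_def by (rule L2_set_le_sum) simp
    also have "\<dots> \<le> (\<Sum>j\<in>(UNIV::'m set). b)" by (rule sum_mono) (rule assms)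
    finally show ?thesis by simp
  qed
  have "norm A \<le> (\<Sum>i\<in>UNIV. norm (A $ i))" unfolding norm_vec_def by (rule L2_set_le_sum) simp
  also have "\<dots> \<le> (\<Sum>i\<in>(UNIV::'k set). of_nat CARD('m) * b)" by (rule sum_mono) (rule r)
  finally show ?thesis by simp
qed

lemma mexp_summable:
  fixes M :: "complex^'m::finite^'m"
  shows "summable (\<lambda>k. (1 / fact k) *\<^sub>R mpow M k)"
proof -
  define m where "m = (\<Sum>i\<in>UNIV. \<Sum>j\<in>UNIV. norm (M $ i $ j))"
  define x where "x = of_nat CARD('m) * m"
  define C :: real where "C = of_nat CARD('m) * of_nat CARD('m)"
  have b: "norm (mpow M k) \<le> C * x^k" for k
    unfolding C_def x_def m_def by (rule norm_le_entries[OF mpow_entry_bound])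
  show ?thesis
  proof (rule summable_comparison_test'[where N=0])
    show "summable (\<lambda>k. C * (inverse (fact k) * x^k))"
      by (rule summable_mult) (rule summable_exp)
    fix k :: nat
    have "norm ((1 / fact k) *\<^sub>R mpow M k) = (1 / fact k) * norm (mpow M k)" by simp
    also have "\<dots> \<le> (1 / fact k) * (C * x^k)" by (rule mult_left_mono[OF b]) simp
    finally show "norm ((1 / fact k) *\<^sub>R mpow M k) \<le> C * (inverse (fact k) * x^k)"
      by (simp add: field_simps)
  qed
qed

lemma bl_rmult: "bounded_linear (\<lambda>A::complex^'m::finite^'k::finite. A ** (M::complex^'l::finite^'m))"
  unfolding linear_conv_bounded_linear[symmetric]
  by (rule linearI) (simp_all add: vec_eq_iff matrix_matrix_mult_def scaleR_sum_right distrib_right sum.distrib)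

lemma bl_lmult: "bounded_linear (\<lambda>A::complex^'l::finite^'m::finite. (M::complex^'m^'k::finite) ** A)"
  unfolding linear_conv_bounded_linear[symmetric]
  by (rule linearI) (simp_all add: vec_eq_iff matrix_matrix_mult_def scaleR_sum_right distrib_left sum.distrib)

lemma scaleR_mm1: "(c *\<^sub>R (A::complex^'m::finite^'k::finite)) ** (B::complex^'l::finite^'m) = c *\<^sub>R (A ** B)"
  by (simp add: vec_eq_iff matrix_matrix_mult_def scaleR_sum_right)
lemma scaleR_mm2: "(A::complex^'m::finite^'k::finite) ** (c *\<^sub>R (B::complex^'l::finite^'m)) = c *\<^sub>R (A ** B)"
  by (simp add: vec_eq_iff matrix_matrix_mult_def scaleR_sum_right)

lemma mexp_comm: "mexp M ** M = M ** mexp (M::complex^'m::finite^'m)"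
proof -
  have "mexp M ** M = (\<Sum>k. ((1 / fact k) *\<^sub>R mpow M k) ** M)"
    unfolding mexp_def by (rule bounded_linear.suminf[OF bl_rmult mexp_summable])
  also have "\<dots> = (\<Sum>k. M ** ((1 / fact k) *\<^sub>R mpow M k))"
    by (simp add: scaleR_mm1 scaleR_mm2 mpow_comm)
  also have "\<dots> = M ** mexp M"
    unfolding mexp_def by (rule bounded_linear.suminf[OF bl_lmult mexp_summable, symmetric])
  finally show ?thesis .
qed


lemma sum_axis_l: "(\<Sum>k\<in>UNIV. (axis j (1::'a::comm_ring_1) $ k) * f k) = f j"
  using sum_axis_r[of f j] by (simp add: mult.commute)

lemma symp_nondeg:
  assumes "\<And>w. symp_form z w = 0" shows "z = 0"
proof -
  have x: "z $ Inl i = 0" for i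
    using assms[of "join 0 (axis i 1)"] by (simp add: symp_form_alt sum_negf sum_axis_l)
  have k: "z $ Inr i = 0" for i
    using assms[of "join (axis i 1) 0"] by (simp add: symp_form_alt sum_axis_r)
  show ?thesis using x k by (simp add: vec_eq_iff) (metis sum.exhaust)
qed

lemma clin_conjconj: "clin f \<Longrightarrow> clin (\<lambda>z. cconj (f (cconj z)))"
  by (unfold_locales) (simp_all add: cconj_add cconj_scale vec.linear_add vec.linear_scale)

definition cmat :: "complex^'m^'k \<Rightarrow> complex^'m^'k" where
  "cmat G = (\<chi> i j. cnj (G $ i $ j))"

lemma cconj_mv: "cconj (G *v v) = cmat G *v cconj v"
  by (simp add: vec_eq_iff cconj_def cmat_def matrix_vector_mult_def)

lemma cmat_transpose: "transpose (cmat G) = cmat (transpose G)"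
  by (simp add: vec_eq_iff cmat_def transpose_def)

context expand begin

lemma neg_graph:
  assumes L: "clin L" "\<And>z. L (K z) = K (L z)"
  shows "\<exists>G::complex^'n^'n. transpose G = G \<and> (\<forall>y. y \<noteq> 0 \<longrightarrow> hr (join y (G *v y)) < 0)
     \<and> (\<forall>y w. symp_form (join y (G *v y)) (L (join w (G *v w))) = 0)"
proof -
  obtain G :: "complex^'n^'n" where G: "transpose G = G" "\<forall>y. y \<noteq> 0 \<longrightarrow> hr (join y (G *v y)) < 0"
      "\<forall>y. stable (join y (G *v y))"
    using main_graph by blast
  show ?thesis using G stable_symp stable_L[OF L] by blast
qed

lemma K_inj: "inj K"
  unfolding vec.linear_inj_iff_eq_0[OF clinK]
proof (intro allI impI)
  fix z assume "K z = 0"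
  then have "symp_form z w = 0" for w using sympK[of z w] by simp
  then show "z = 0" by (rule symp_nondeg)
qed

lemma pos_graph:
  assumes L: "clin L" "\<And>z. L (K z) = K (L z)"
  shows "\<exists>G::complex^'n^'n. transpose G = G \<and> (\<forall>y. y \<noteq> 0 \<longrightarrow> hr (join y (G *v y)) > 0)
     \<and> (\<forall>y w. symp_form (join y (G *v y)) (L (join w (G *v w))) = 0)"
proof -
  have surj: "surj K" by (rule vec.linear_inj_imp_surj[OF clinK K_inj])
  obtain Ki where Ki: "clin Ki" "Ki \<circ> K = id"
    using vec.linear_injective_left_inverse[OF clinK K_inj] by blast
  have KiK: "Ki (K z) = z" for z using Ki(2) by (simp add: fun_eq_iff)
  have KKi: "K (Ki z) = z" for z
  proof -
    obtain x where "z = K x" using surj by blast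
    then show ?thesis by (simp add: KiK)
  qed
  define K' where "K' z = cconj (Ki (cconj z))" for z
  define L' where "L' z = cconj (L (cconj z))" for z
  interpret E': expand K'
  proof (rule expand.intro)
    show "clin K'" unfolding K'_def by (rule clin_conjconj[OF Ki(1)])
    fix z w
    have kk: "symp_form (Ki u) (Ki v) = symp_form u v" for u v
      using sympK[of "Ki u" "Ki v"] by (simp add: KKi)
    have "symp_form (K' z) (K' w) = cnj (symp_form (Ki (cconj z)) (Ki (cconj w)))"
      unfolding K'_def by (rule symp_cconj)
    also have "\<dots> = cnj (symp_form (cconj z) (cconj w))" by (simp only: kk)
    also have "\<dots> = symp_form z w" by (simp add: symp_cconj)
    finally show "symp_form (K' z) (K' w) = symp_form z w" .
  next
    fix z :: "complex^('n+'n)" assume "z \<noteq> 0"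
    then have "Ki (cconj z) \<noteq> 0" by (metis KKi K0 cconj_eq_0)
    then have "hr (K (Ki (cconj z))) > hr (Ki (cconj z))" by (rule hrK)
    then show "hr (K' z) > hr z" by (simp add: K'_def KKi hr_cconj)
  qed
  have lL': "clin L'" unfolding L'_def by (rule clin_conjconj[OF L(1)])
  have cL: "L (Ki z) = Ki (L z)" for z by (metis KiK KKi L(2))
  have cL': "L' (K' z) = K' (L' z)" for z by (simp add: L'_def K'_def cL)
  obtain G' :: "complex^'n^'n" where G': "transpose G' = G'" "\<forall>y. y \<noteq> 0 \<longrightarrow> hr (join y (G' *v y)) < 0"
      "\<forall>y w. symp_form (join y (G' *v y)) (L' (join w (G' *v w))) = 0"
    using E'.neg_graph[OF lL' cL'] by blast
  have jc: "join y (cmat G' *v y) = cconj (join (cconj y) (G' *v cconj y))" for y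
    by (simp add: cconj_join cconj_mv)
  show ?thesis
  proof (intro exI[of _ "cmat G'"] conjI allI impI)
    show "transpose (cmat G') = cmat G'" by (simp add: cmat_transpose G'(1))
    fix y :: "complex^'n" assume "y \<noteq> 0"
    then have "cconj y \<noteq> 0" by simp
    then show "hr (join y (cmat G' *v y)) > 0" using G'(2) by (simp add: jc hr_cconj)
  next
    fix y w :: "complex^'n"
    have "L (cconj (join (cconj w) (G' *v cconj w))) = cconj (L' (join (cconj w) (G' *v cconj w)))"
      by (simp add: L'_def)
    then show "symp_form (join y (cmat G' *v y)) (L (join w (cmat G' *v w))) = 0"
      using G'(3) by (simp add: jc symp_cconj)
  qed
qed

end

lemma sp_expand:
  assumes "strictly_positive (Km :: complex^('n::finite+'n)^('n+'n))"
  shows "expand (\<lambda>z. Km *v z)"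
proof (rule expand.intro)
  show "clin ((*v) Km)" by simp
  show "symp_form (Km *v z) (Km *v w) = symp_form z w" for z w
    using assms unfolding strictly_positive_def canonical_def by blast
  fix z :: "complex^('n+'n)" assume "z \<noteq> 0"
  then have "\<i> * (symp_form (cconj (Km *v z)) (Km *v z) - symp_form (cconj z) z) > 0"
    using assms unfolding strictly_positive_def by blast
  then have "complex_of_real (hr (Km *v z)) - complex_of_real (hr z) > 0"
    by (simp add: right_diff_distrib hr_sym)
  then show "hr (Km *v z) > hr z" by (simp add: less_complex_def)
qed


definition ebas :: "'n::finite + 'n \<Rightarrow> (real^'n) \<times> (real^'n)" where
  "ebas a = (case a of Inl i \<Rightarrow> ex i | Inr i \<Rightarrow> exi i)"

definition qmat :: "((real^'n::finite) \<times> (real^'n) \<Rightarrow> complex) \<Rightarrow> complex^('n+'n)^('n+'n)" where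
  "qmat q = (\<chi> a b. d2 q (ebas a) (ebas b))"

lemma qmat_sym: "transpose (qmat q) = qmat q"
  by (simp add: vec_eq_iff transpose_def qmat_def d2_def add.commute)

lemma ham_rows: "hamilton_map q $ Inl i = qmat q $ Inr i" "hamilton_map q $ Inr i = - (qmat q $ Inl i)"
  by (simp_all add: vec_eq_iff hamilton_map_def qmat_def ebas_def split: sum.split)

lemma bdot_add_l: "bdot (z + z') w = bdot z w + bdot z' w"
  by (simp add: bdot_def distrib_right sum.distrib)
lemma bdot_add_r: "bdot z (w + w') = bdot z w + bdot z w'"
  by (simp add: bdot_def distrib_left sum.distrib)
lemma bdot_comm: "bdot z w = bdot w z"
  by (simp add: bdot_def mult.commute)
lemma bdot_mv: "bdot ((A::complex^'m::finite^'k::finite) *v u) v = bdot u (transpose A *v v)"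
  unfolding bdot_def matrix_vector_mult_def transpose_def
  by (simp add: sum_distrib_left sum_distrib_right mult_ac) (rule sum.swap)

lemma symp_ham: "symp_form z (hamilton_map q *v w) = bdot z (qmat q *v w)"
proof -
  have "symp_form z (hamilton_map q *v w) =
     (\<Sum>i\<in>UNIV. z $ Inr i * (qmat q *v w) $ Inr i + z $ Inl i * (qmat q *v w) $ Inl i)"
    unfolding symp_form_def
    by (rule sum.cong) (simp_all add: matrix_vector_mult_def ham_rows sum_negf)
  also have "\<dots> = bdot z (qmat q *v w)"
    unfolding bdot_def sum_UNIV_plus by (simp add: sum.distrib)
  finally show ?thesis .
qed

definition Bq :: "complex^'n^'n \<Rightarrow> complex^'n^'n \<Rightarrow> complex^'n^'n \<Rightarrow> (real^'n::finite) \<times> (real^'n) \<Rightarrow> (real^'n) \<times> (real^'n) \<Rightarrow> complex" where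
  "Bq A C D u v = (\<Sum>i\<in>UNIV. \<Sum>j\<in>UNIV.
        A $ i $ j * of_real (fst u $ i) * of_real (fst v $ j)
      + C $ i $ j * of_real (snd u $ i) * of_real (fst v $ j)
      + D $ i $ j * of_real (snd u $ i) * of_real (snd v $ j))"

lemma Bq_add_l: "Bq A C D (u + u') v = Bq A C D u v + Bq A C D u' v"
  by (simp add: Bq_def algebra_simps sum.distrib)
lemma Bq_add_r: "Bq A C D u (v + v') = Bq A C D u v + Bq A C D u v'"
  by (simp add: Bq_def algebra_simps sum.distrib)

lemma d2_Bq:
  assumes "\<And>u. q u = Bq A C D u u"
  shows "d2 q u v = Bq A C D u v + Bq A C D v u"
  by (simp add: d2_def assms Bq_add_l Bq_add_r)

lemma sum_axis_real_r: "(\<Sum>k\<in>UNIV. f k * complex_of_real (axis j 1 $ k)) = f j"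
proof -
  have "(\<Sum>k\<in>UNIV. f k * complex_of_real (axis j 1 $ k)) = (\<Sum>k\<in>UNIV. if k = j then f k else 0)"
    by (rule sum.cong) (auto simp: axis_def)
  then show ?thesis by simp
qed

lemma Bq_basis:
  "Bq A C D (ebas a) (ebas b) = (case (a, b) of (Inl i, Inl j) \<Rightarrow> A $ i $ j | (Inr i, Inl j) \<Rightarrow> C $ i $ j
      | (Inr i, Inr j) \<Rightarrow> D $ i $ j | (Inl i, Inr j) \<Rightarrow> 0)"
proof -
  have e: "(\<Sum>i\<in>UNIV. \<Sum>j\<in>UNIV. F $ i $ j * complex_of_real (axis k 1 $ i) * complex_of_real (axis l 1 $ j)) = F $ k $ l"
    for F :: "complex^'a::finite^'a" and k l
  proof -
    have "(\<Sum>i\<in>UNIV. \<Sum>j\<in>UNIV. F $ i $ j * complex_of_real (axis k 1 $ i) * complex_of_real (axis l 1 $ j))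
      = (\<Sum>i\<in>UNIV. F $ i $ l * complex_of_real (axis k 1 $ i))"
      by (rule sum.cong) (simp_all add: sum_axis_real_r)
    also have "\<dots> = F $ k $ l" by (rule sum_axis_real_r)
    finally show ?thesis .
  qed
  show ?thesis
    by (simp add: Bq_def ebas_def ex_def exi_def sum.distrib e split: sum.split)
qed


lemma cvec_nth[simp]: "cvec x $ i = complex_of_real (x $ i)" by (simp add: cvec_def)

lemma q_quad:
  assumes "quadratic_form q"
  shows "q (x, \<xi>) = (1/2) * bdot (join (cvec x) (cvec \<xi>)) (qmat q *v join (cvec x) (cvec \<xi>))"
proof -
  obtain A C D :: "complex^'a^'a" where qf: "\<And>x \<xi>. q (x, \<xi>) = (\<Sum>i\<in>UNIV. \<Sum>j\<in>UNIV.
        A $ i $ j * of_real (x $ i) * of_real (x $ j)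
      + C $ i $ j * of_real (\<xi> $ i) * of_real (x $ j)
      + D $ i $ j * of_real (\<xi> $ i) * of_real (\<xi> $ j))"
    using assms unfolding quadratic_form_def by blast
  have qB: "q u = Bq A C D u u" for u by (cases u) (simp add: qf Bq_def)
  define z where "z = join (cvec x) (cvec \<xi>)"
  define N where "N a b = Bq A C D (ebas a) (ebas b)" for a b
  have M: "qmat q $ a $ b = N a b + N b a" for a b
    by (simp add: qmat_def N_def d2_Bq[OF qB])
  define S where "S = (\<Sum>a\<in>UNIV. \<Sum>b\<in>UNIV. z $ a * N a b * z $ b)"
  have "bdot z (qmat q *v z) = (\<Sum>a\<in>UNIV. \<Sum>b\<in>UNIV. z $ a * N a b * z $ b + z $ a * N b a * z $ b)"
    unfolding bdot_def matrix_vector_mult_def M by (simp add: sum_distrib_left algebra_simps)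
  also have "\<dots> = S + (\<Sum>a\<in>UNIV. \<Sum>b\<in>UNIV. z $ a * N b a * z $ b)"
    unfolding S_def by (simp add: sum.distrib)
  also have "(\<Sum>a\<in>UNIV. \<Sum>b\<in>UNIV. z $ a * N b a * z $ b) = S"
    unfolding S_def by (subst sum.swap) (simp add: mult_ac)
  finally have e1: "bdot z (qmat q *v z) = 2 * S" by simp
  have "S = (\<Sum>i\<in>UNIV. \<Sum>j\<in>UNIV. of_real (x $ i) * A $ i $ j * of_real (x $ j))
      + (\<Sum>i\<in>UNIV. \<Sum>j\<in>UNIV. of_real (\<xi> $ i) * C $ i $ j * of_real (x $ j))
      + (\<Sum>i\<in>UNIV. \<Sum>j\<in>UNIV. of_real (\<xi> $ i) * D $ i $ j * of_real (\<xi> $ j))"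
    unfolding S_def sum_UNIV_plus z_def N_def Bq_basis by (simp add: sum.distrib)
  also have "\<dots> = q (x, \<xi>)"
    by (simp add: qf sum.distrib mult_ac)
  finally show ?thesis using e1 z_def by simp
qed


lemma hr_cvec: "hr (join (cvec y) (G *v cvec y)) = 2 * (y \<bullet> (im_mat G *v y))"
  unfolding hr_def inner_vec_def matrix_vector_mult_def im_mat_def
  by (simp add: Im_sum sum_distrib_left sum_distrib_right mult_ac)

lemma cvec_eq_0: "cvec y = 0 \<longleftrightarrow> y = 0"
  by (simp add: vec_eq_iff cvec_def)

lemma mv_diff: "((A::complex^'m::finite^'k::finite) - B) *v x = A *v x - B *v x"
  by (simp add: vec_eq_iff matrix_vector_mult_def sum_subtractf algebra_simps)

lemma mv_uminus: "(- (A::real^'m::finite^'k::finite)) *v x = - (A *v x)"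
  by (simp add: vec_eq_iff matrix_vector_mult_def sum_negf)

lemma mv_negx: "(A::complex^'m::finite^'k::finite) *v (- x) = - (A *v x)"
  by (simp add: vec_eq_iff matrix_vector_mult_def sum_negf)

lemma Q_sym: "bdot b (qmat q *v a) = bdot a (qmat q *v b)"
proof -
  have "bdot a (qmat q *v b) = bdot (qmat q *v b) a" by (rule bdot_comm)
  also have "\<dots> = bdot b (transpose (qmat q) *v a)" by (rule bdot_mv)
  finally show ?thesis by (simp add: qmat_sym)
qed

theorem proposition4p6:
  fixes q :: "(real^'n::finite) \<times> (real^'n) \<Rightarrow> complex"
  assumes "quadratic_form q"
    and "strictly_positive (mexp (hamilton_map q))"
  shows "supersymmetric q"
proof -
  define H where "H = hamilton_map q"
  define M where "M = qmat q"
  define Km where "Km = mexp H"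
  interpret E: expand "\<lambda>z. Km *v z" using sp_expand assms(2) unfolding Km_def H_def by blast
  have lL: "clin (\<lambda>z. H *v z)" by simp
  have cL: "H *v (Km *v z) = Km *v (H *v z)" for z
    by (simp add: matrix_vector_mul_assoc Km_def mexp_comm)
  obtain Gm :: "complex^'n^'n" where Gm: "transpose Gm = Gm" "\<forall>y. y \<noteq> 0 \<longrightarrow> hr (join y (Gm *v y)) < 0"
      "\<forall>y w. symp_form (join y (Gm *v y)) (H *v (join w (Gm *v w))) = 0"
    using E.neg_graph[OF lL cL] by blast
  obtain Gp :: "complex^'n^'n" where Gp: "transpose Gp = Gp" "\<forall>y. y \<noteq> 0 \<longrightarrow> hr (join y (Gp *v y)) > 0"
      "\<forall>y w. symp_form (join y (Gp *v y)) (H *v (join w (Gp *v w))) = 0"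
    using E.pos_graph[OF lL cL] by blast
  have Qm: "bdot (join y (Gm *v y)) (M *v join y (Gm *v y)) = 0" for y
    using Gm(3) by (simp add: symp_ham H_def M_def)
  have Qp: "bdot (join y (Gp *v y)) (M *v join y (Gp *v y)) = 0" for y
    using Gp(3) by (simp add: symp_ham H_def M_def)
  define D0 where "D0 = Gp - Gm"
  have lD: "clin (\<lambda>y. D0 *v y)" by simp
  have iD: "inj (\<lambda>y. D0 *v y)" unfolding vec.linear_inj_iff_eq_0[OF lD]
  proof (intro allI impI)
    fix y assume "D0 *v y = 0"
    then have e: "Gp *v y = Gm *v y" by (simp add: D0_def mv_diff)
    show "y = 0"
    proof (rule ccontr)
      assume "y \<noteq> 0"
      then show False using Gp(2) Gm(2) e by force
    qed
  qed
  have sD: "surj (\<lambda>y. D0 *v y)" by (rule vec.linear_inj_imp_surj[OF lD iD])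
  obtain g where g: "clin g" "g \<circ> (\<lambda>y. D0 *v y) = id"
    using vec.linear_injective_left_inverse[OF lD iD] by blast
  have gD: "g (D0 *v y) = y" for y using g(2) by (simp add: fun_eq_iff)
  have Dg: "D0 *v g v = v" for v
  proof -
    obtain y where "v = D0 *v y" using sD by blast
    then show ?thesis by (simp add: gD)
  qed
  define \<phi> where "\<phi> v = join (g v) (Gp *v g v)" for v
  define \<psi> where "\<psi> u = join (- g u) (Gm *v (- g u))" for u
  have l\<phi>: "clin \<phi>" unfolding \<phi>_def by (intro clin_join g(1) clin_comp[OF clin_mv g(1)])
  have l\<psi>: "clin \<psi>" unfolding \<psi>_def
    by (intro clin_join clin_comp[OF clin_mv] clin_comp[OF clin_smult[of "-1"] g(1), simplified])
  define Pp where "Pp = matrix \<phi>"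
  define Pm where "Pm = matrix \<psi>"
  define W where "W = transpose Pm ** M ** Pp"
  define B where "B = transpose W"
  have main: "q (x, \<xi>) = bdot (B *v (cvec \<xi> - Gp *v cvec x)) (cvec \<xi> - Gm *v cvec x)" for x \<xi>
  proof -
    define X where "X = cvec x"
    define \<Xi> where "\<Xi> = cvec \<xi>"
    define u where "u = \<Xi> - Gp *v X"
    define v where "v = \<Xi> - Gm *v X"
    have vu: "v - u = D0 *v X" by (simp add: u_def v_def D0_def mv_diff)
    have gvu: "g v - g u = X" using gD[of X] vu vec.linear_diff[OF g(1)] by metis
    have Dv: "Gp *v g v = v + Gm *v g v" using Dg[of v] by (simp add: D0_def mv_diff algebra_simps)
    have z: "join X \<Xi> = \<phi> v + \<psi> u"
    proof -
      have "Gp *v g v + Gm *v (- g u) = v + Gm *v (g v - g u)"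
        by (simp add: Dv matrix_vector_right_distrib matrix_vector_mult_diff_distrib mv_negx algebra_simps)
      also have "\<dots> = \<Xi>" unfolding gvu by (simp add: v_def)
      finally show ?thesis unfolding \<phi>_def \<psi>_def join_add using gvu by (simp add: algebra_simps)
    qed
    have Q0p: "bdot (\<phi> v) (M *v \<phi> v) = 0" unfolding \<phi>_def by (rule Qp)
    have Q0m: "bdot (\<psi> u) (M *v \<psi> u) = 0" unfolding \<psi>_def by (rule Qm)
    have "q (x, \<xi>) = (1/2) * bdot (join X \<Xi>) (M *v join X \<Xi>)"
      unfolding X_def \<Xi>_def M_def by (rule q_quad[OF assms(1)])
    also have "bdot (join X \<Xi>) (M *v join X \<Xi>) = 2 * bdot (\<psi> u) (M *v \<phi> v)"
      unfolding z using Q0p Q0m Q_sym[where q=q and b="\<psi> u" and a="\<phi> v"]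
      by (simp add: bdot_add_l bdot_add_r matrix_vector_right_distrib M_def)
    also have "bdot (\<psi> u) (M *v \<phi> v) = bdot (Pm *v u) (M *v (Pp *v v))"
      unfolding Pm_def Pp_def matrix_works[OF l\<phi>] matrix_works[OF l\<psi>] ..
    also have "\<dots> = bdot u (W *v v)"
      by (simp add: bdot_mv W_def matrix_vector_mul_assoc matrix_mul_assoc)
    also have "\<dots> = bdot (B *v u) v" by (simp only: bdot_mv B_def transpose_transpose)
    finally show ?thesis by (simp add: u_def v_def X_def \<Xi>_def)
  qed
  have pd1: "pos_def (im_mat Gp)" unfolding pos_def_def
  proof (intro allI impI)
    fix y :: "real^'n" assume "y \<noteq> 0"
    then have "hr (join (cvec y) (Gp *v cvec y)) > 0" using Gp(2) cvec_eq_0 by blast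
    then show "0 < y \<bullet> (im_mat Gp *v y)" by (simp add: hr_cvec)
  qed
  have pd2: "pos_def (- im_mat Gm)" unfolding pos_def_def
  proof (intro allI impI)
    fix y :: "real^'n" assume "y \<noteq> 0"
    then have "hr (join (cvec y) (Gm *v cvec y)) < 0" using Gm(2) cvec_eq_0 by blast
    then show "0 < y \<bullet> (- im_mat Gm *v y)" by (simp add: hr_cvec mv_uminus)
  qed
  show ?thesis
    unfolding supersymmetric_def
    apply (rule exI[of _ B], rule exI[of _ Gp], rule exI[of _ Gm])
    apply (intro conjI Gp(1) Gm(1) pd1 pd2 allI)
    apply (rule main)
    done
qed


end
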